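(* Let $\epsilon>0$ (or any complex $\epsilon$), $n\in\mathbb{Z}$, and $\vec n=(n,\dots,n)\in\mathbb{Z}^k$. Then $$(\epsilon-z_2)(\epsilon-z_3)\cdots(\epsilon-z_k)\ \overset{\vec n}{\approx}\ \sum_{i=0}^{k-1}c_\epsilon(k,i)(\epsilon-z_1)\cdots(\epsilon-z_i),\qquad c_\epsilon(k,i)=\epsilon^{k-i-1}q^i\frac{(q;q)_{k-1}}{(q;q)_i},$$ where the $i=0$ term of the product is $1$.
   Context: Fix $q\in(0,1)$, $k\ge1$; $(a;q)_n=\prod_{i=0}^{n-1}(1-q^ia)$. For $\vec n\in\mathbb{Z}^k$ and two functions $f,g:\mathbb{C}^k\to\mathbb{C}$, write $f\overset{\vec n}{\approx}g$ if, identically in $\vec z$ (as rational functions), $$\sum_{\sigma\in S_k}\prod_{1\le B<A\le k}\frac{z_{\sigma(A)}-q^{-1}z_{\sigma(B)}}{z_{\sigma(A)}-z_{\sigma(B)}}\prod_{j=1}^k(\epsilon-z_{\sigma(j)})^{n_j}\Big(f(z_{\sigma(1)},\dots,z_{\sigma(k)})-g(z_{\sigma(1)},\dots,z_{\sigma(k)})\Big)=0.$$ *)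

theory Defs
  imports Complex_Main "HOL-Combinatorics.Permutations"
begin

definition qpoch :: "complex \<Rightarrow> complex \<Rightarrow> nat \<Rightarrow> complex" where
  "qpoch a q n = (\<Prod>i<n. 1 - q ^ i * a)"

text \<open>Variables are indexed 1..k (z :: nat => complex, only
  z 1, ..., z k matter). Identity "as rational functions" is rendered as equality at every
  point where the expression is defined: pairwise distinct coordinates, and (if some
  exponent is negative) all coordinates different from eps.\<close>
definition qapprox ::
  "real \<Rightarrow> complex \<Rightarrow> nat \<Rightarrow> (nat \<Rightarrow> int) \<Rightarrow> ((nat \<Rightarrow> complex) \<Rightarrow> complex)
     \<Rightarrow> ((nat \<Rightarrow> complex) \<Rightarrow> complex) \<Rightarrow> bool" where
  "qapprox q eps k ns f g \<longleftrightarrow>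
     (\<forall>z :: nat \<Rightarrow> complex.
        (\<forall>i\<in>{1..k}. \<forall>j\<in>{1..k}. i \<noteq> j \<longrightarrow> z i \<noteq> z j) \<longrightarrow>
        ((\<exists>j\<in>{1..k}. ns j < 0) \<longrightarrow> (\<forall>i\<in>{1..k}. z i \<noteq> eps)) \<longrightarrow>
        (\<Sum>\<sigma>\<in>{\<sigma>. \<sigma> permutes {1..k}}.
            (\<Prod>A\<in>{1..k}. \<Prod>B\<in>{1..<A}.
                (z (\<sigma> A) - inverse (complex_of_real q) * z (\<sigma> B)) / (z (\<sigma> A) - z (\<sigma> B)))
          * (\<Prod>j\<in>{1..k}. (eps - z (\<sigma> j)) powi ns j)
          * (f (z \<circ> \<sigma>) - g (z \<circ> \<sigma>))) = 0)"

end

theory Submission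
  imports Defs
begin

definition PP :: "nat \<Rightarrow> (nat \<times> nat) set" where
  "PP k = (SIGMA A:{1..k}. {1..<A})"

lemma nested_PP:
  "(\<Prod>A\<in>{1..k}. \<Prod>B\<in>{1..<A}. G A B) = (\<Prod>p\<in>PP k. G (fst p) (snd p))"
  unfolding PP_def by (subst prod.Sigma) (auto simp: case_prod_beta)

lemma PP_mem: "p \<in> PP k \<longleftrightarrow> 1 \<le> snd p \<and> snd p < fst p \<and> fst p \<le> k"
  unfolding PP_def by (cases p) auto

lemma finite_PP: "finite (PP k)"
  unfolding PP_def by auto

lemma PP_swap:
  fixes t k :: nat and G :: "nat \<Rightarrow> nat \<Rightarrow> 'a::comm_monoid_mult"
  assumes "1 \<le> t" "t + 1 \<le> k"
  defines "s \<equiv> Transposition.transpose t (t+1)"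
  shows "(\<Prod>p\<in>PP k. G (s (fst p)) (s (snd p))) = G t (t+1) * (\<Prod>p\<in>PP k - {(t+1,t)}. G (fst p) (snd p))"
    and "(\<Prod>p\<in>PP k. G (fst p) (snd p)) = G (t+1) t * (\<Prod>p\<in>PP k - {(t+1,t)}. G (fst p) (snd p))"
proof -
  have mem: "(t+1,t) \<in> PP k" using assms by (simp add: PP_mem)
  let ?Q = "PP k - {(t+1,t)}"
  let ?h = "\<lambda>p. (s (fst p), s (snd p))"
  have inQ: "?h p \<in> ?Q" if "p \<in> ?Q" for p
    using that assms unfolding s_def
    by (cases p) (auto simp: PP_mem transpose_def)
  have hh: "?h (?h p) = p" for p by (simp add: s_def)
  have bij: "bij_betw ?h ?Q ?Q"
    by (rule bij_betw_byWitness[where f'="?h"]) (use inQ hh in auto)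
  have "(\<Prod>p\<in>?Q. G (s (fst p)) (s (snd p))) = (\<Prod>p\<in>?Q. G (fst p) (snd p))"
    using prod.reindex_bij_betw[OF bij, of "\<lambda>p. G (fst p) (snd p)"] by simp
  moreover have "(\<Prod>p\<in>PP k. G (s (fst p)) (s (snd p))) = G (s (t+1)) (s t) * (\<Prod>p\<in>?Q. G (s (fst p)) (s (snd p)))"
    using prod.remove[OF finite_PP mem, of "\<lambda>p. G (s (fst p)) (s (snd p))"] by simp
  ultimately show "(\<Prod>p\<in>PP k. G (s (fst p)) (s (snd p))) = G t (t+1) * (\<Prod>p\<in>?Q. G (fst p) (snd p))"
    by (simp add: s_def)
  show "(\<Prod>p\<in>PP k. G (fst p) (snd p)) = G (t+1) t * (\<Prod>p\<in>?Q. G (fst p) (snd p))"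
    using prod.remove[OF finite_PP mem, of "\<lambda>p. G (fst p) (snd p)"] by simp
qed

definition Zs :: "real \<Rightarrow> complex \<Rightarrow> nat \<Rightarrow> int \<Rightarrow> ((nat \<Rightarrow> complex) \<Rightarrow> complex) \<Rightarrow> bool" where
  "Zs q eps k n h \<longleftrightarrow> (\<forall>z :: nat \<Rightarrow> complex.
        (\<forall>i\<in>{1..k}. \<forall>j\<in>{1..k}. i \<noteq> j \<longrightarrow> z i \<noteq> z j) \<longrightarrow>
        (\<Sum>\<sigma>\<in>{\<sigma>. \<sigma> permutes {1..k}}.
            (\<Prod>A\<in>{1..k}. \<Prod>B\<in>{1..<A}.
                (z (\<sigma> A) - inverse (complex_of_real q) * z (\<sigma> B)) / (z (\<sigma> A) - z (\<sigma> B)))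
          * (\<Prod>j\<in>{1..k}. (eps - z (\<sigma> j)) powi n)
          * h (z \<circ> \<sigma>)) = 0)"

lemma pair_alg:
  fixes a b qq :: complex
  assumes "qq \<noteq> 0" "a \<noteq> b"
  shows "(b - inverse qq * a) / (b - a) * (qq * a - b) + (a - inverse qq * b) / (a - b) * (qq * b - a) = 0"
proof -
  have "b - a \<noteq> 0" "a - b \<noteq> 0" using assms by auto
  then show ?thesis using assms by (simp add: field_simps)
qed

lemma Zs_local:
  fixes q :: real and t k :: nat and g :: "(nat \<Rightarrow> complex) \<Rightarrow> complex"
  assumes q0: "q \<noteq> 0" and t: "1 \<le> t" "t + 1 \<le> k"
    and gs: "\<And>x. g (x \<circ> Transposition.transpose t (t+1)) = g x"
  shows "Zs q eps k n (\<lambda>x. (complex_of_real q * x t - x (t+1)) * g x)"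
  unfolding Zs_def
proof (intro allI impI)
  fix z :: "nat \<Rightarrow> complex"
  assume zd: "\<forall>i\<in>{1..k}. \<forall>j\<in>{1..k}. i \<noteq> j \<longrightarrow> z i \<noteq> z j"
  define s where "s = Transposition.transpose t (t+1)"
  have sp: "s permutes {1..k}" unfolding s_def using t by (intro permutes_swap_id) auto
  define f where "f = (\<lambda>a b. (a - inverse (complex_of_real q) * b) / (a - b))"
  define T where "T = (\<lambda>\<sigma>. (\<Prod>A\<in>{1..k}. \<Prod>B\<in>{1..<A}.
                (z (\<sigma> A) - inverse (complex_of_real q) * z (\<sigma> B)) / (z (\<sigma> A) - z (\<sigma> B)))
          * (\<Prod>j\<in>{1..k}. (eps - z (\<sigma> j)) powi n)
          * (complex_of_real q * (z \<circ> \<sigma>) t - (z \<circ> \<sigma>) (t+1)) * g (z \<circ> \<sigma>))"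
  have pt: "T \<sigma> + T (\<sigma> \<circ> s) = 0" if \<sigma>: "\<sigma> permutes {1..k}" for \<sigma>
  proof -
    let ?G = "\<lambda>A B. f (z (\<sigma> A)) (z (\<sigma> B))"
    define R where "R = (\<Prod>p\<in>PP k - {(t+1,t)}. ?G (fst p) (snd p))"
    have W1: "(\<Prod>A\<in>{1..k}. \<Prod>B\<in>{1..<A}.
                (z (\<sigma> A) - inverse (complex_of_real q) * z (\<sigma> B)) / (z (\<sigma> A) - z (\<sigma> B)))
          = ?G (t+1) t * R"
      unfolding R_def nested_PP f_def by (rule PP_swap(2)[OF t])
    have W2: "(\<Prod>A\<in>{1..k}. \<Prod>B\<in>{1..<A}.
                (z ((\<sigma> \<circ> s) A) - inverse (complex_of_real q) * z ((\<sigma> \<circ> s) B)) / (z ((\<sigma> \<circ> s) A) - z ((\<sigma> \<circ> s) B)))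
          = ?G t (t+1) * R"
      unfolding R_def nested_PP f_def o_def s_def by (rule PP_swap(1)[OF t])
    have E: "(\<Prod>j\<in>{1..k}. (eps - z ((\<sigma> \<circ> s) j)) powi n) = (\<Prod>j\<in>{1..k}. (eps - z (\<sigma> j)) powi n)"
      using prod.permute[OF sp, of "\<lambda>j. (eps - z (\<sigma> j)) powi n"] by (simp add: o_def)
    have gg: "g (z \<circ> (\<sigma> \<circ> s)) = g (z \<circ> \<sigma>)"
      using gs[of "z \<circ> \<sigma>"] by (simp add: s_def o_assoc)
    have st: "s t = Suc t" "s (Suc t) = t" by (auto simp: s_def)
    have ab: "z (\<sigma> t) \<noteq> z (\<sigma> (t+1))"
    proof -
      have "\<sigma> t \<noteq> \<sigma> (t+1)" using permutes_inj[OF \<sigma>] by (auto dest: injD)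
      moreover have "\<sigma> t \<in> {1..k}" "\<sigma> (t+1) \<in> {1..k}" using t permutes_in_image[OF \<sigma>] by auto
      ultimately show ?thesis using zd by blast
    qed
    have "T \<sigma> + T (\<sigma> \<circ> s) = R * (\<Prod>j\<in>{1..k}. (eps - z (\<sigma> j)) powi n) * g (z \<circ> \<sigma>) *
       (f (z (\<sigma> (t+1))) (z (\<sigma> t)) * (complex_of_real q * z (\<sigma> t) - z (\<sigma> (t+1))) +
        f (z (\<sigma> t)) (z (\<sigma> (t+1))) * (complex_of_real q * z (\<sigma> (t+1)) - z (\<sigma> t)))"
      unfolding T_def W1 W2 E gg by (simp add: st o_def) (simp add: algebra_simps)
    also have "\<dots> = 0" unfolding f_def using pair_alg[OF _ ab, of "complex_of_real q"] q0 by simp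
    finally show ?thesis .
  qed
  have "(\<Sum>\<sigma>\<in>{\<sigma>. \<sigma> permutes {1..k}}. T \<sigma>) = (\<Sum>\<sigma>\<in>{\<sigma>. \<sigma> permutes {1..k}}. T (\<sigma> \<circ> s))"
    by (rule sum_permutations_compose_right[OF sp])
  then have "2 * (\<Sum>\<sigma>\<in>{\<sigma>. \<sigma> permutes {1..k}}. T \<sigma>) = (\<Sum>\<sigma>\<in>{\<sigma>. \<sigma> permutes {1..k}}. T \<sigma> + T (\<sigma> \<circ> s))"
    by (simp add: sum.distrib)
  also have "\<dots> = 0" using pt by simp
  finally have "(\<Sum>\<sigma>\<in>{\<sigma>. \<sigma> permutes {1..k}}. T \<sigma>) = 0" by simp
  then show "(\<Sum>\<sigma>\<in>{\<sigma>. \<sigma> permutes {1..k}}.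
            (\<Prod>A\<in>{1..k}. \<Prod>B\<in>{1..<A}.
                (z (\<sigma> A) - inverse (complex_of_real q) * z (\<sigma> B)) / (z (\<sigma> A) - z (\<sigma> B)))
          * (\<Prod>j\<in>{1..k}. (eps - z (\<sigma> j)) powi n)
          * ((complex_of_real q * (z \<circ> \<sigma>) t - (z \<circ> \<sigma>) (t+1)) * g (z \<circ> \<sigma>))) = 0"
    unfolding T_def by (simp add: mult.assoc)
qed

lemma Zs_add: "Zs q eps k n h1 \<Longrightarrow> Zs q eps k n h2 \<Longrightarrow> Zs q eps k n (\<lambda>x. h1 x + h2 x)"
  unfolding Zs_def by (simp add: distrib_left sum.distrib)

lemma Zs_scale: "Zs q eps k n h \<Longrightarrow> Zs q eps k n (\<lambda>x. c * h x)"
  unfolding Zs_def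
proof (intro allI impI)
  fix z :: "nat \<Rightarrow> complex"
  assume H: "\<forall>z. (\<forall>i\<in>{1..k}. \<forall>j\<in>{1..k}. i \<noteq> j \<longrightarrow> z i \<noteq> z j) \<longrightarrow>
          (\<Sum>\<sigma>\<in>{\<sigma>. \<sigma> permutes {1..k}}.
              (\<Prod>A = 1..k. \<Prod>B = 1..<A. (z (\<sigma> A) - inverse (complex_of_real q) * z (\<sigma> B)) / (z (\<sigma> A) - z (\<sigma> B))) *
              (\<Prod>j = 1..k. (eps - z (\<sigma> j)) powi n) * h (z \<circ> \<sigma>)) = 0"
    and d: "\<forall>i\<in>{1..k}. \<forall>j\<in>{1..k}. i \<noteq> j \<longrightarrow> z i \<noteq> z j"
  have "(\<Sum>\<sigma>\<in>{\<sigma>. \<sigma> permutes {1..k}}.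
              (\<Prod>A = 1..k. \<Prod>B = 1..<A. (z (\<sigma> A) - inverse (complex_of_real q) * z (\<sigma> B)) / (z (\<sigma> A) - z (\<sigma> B))) *
              (\<Prod>j = 1..k. (eps - z (\<sigma> j)) powi n) * (c * h (z \<circ> \<sigma>))) =
        c * (\<Sum>\<sigma>\<in>{\<sigma>. \<sigma> permutes {1..k}}.
              (\<Prod>A = 1..k. \<Prod>B = 1..<A. (z (\<sigma> A) - inverse (complex_of_real q) * z (\<sigma> B)) / (z (\<sigma> A) - z (\<sigma> B))) *
              (\<Prod>j = 1..k. (eps - z (\<sigma> j)) powi n) * h (z \<circ> \<sigma>))"
    by (simp add: sum_distrib_left algebra_simps)
  also have "\<dots> = 0" using H d by simp
  finally show "(\<Sum>\<sigma>\<in>{\<sigma>. \<sigma> permutes {1..k}}.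
              (\<Prod>A = 1..k. \<Prod>B = 1..<A. (z (\<sigma> A) - inverse (complex_of_real q) * z (\<sigma> B)) / (z (\<sigma> A) - z (\<sigma> B))) *
              (\<Prod>j = 1..k. (eps - z (\<sigma> j)) powi n) * (c * h (z \<circ> \<sigma>))) = 0" .
qed

lemma Zs_zero: "Zs q eps k n (\<lambda>x. 0)"
  unfolding Zs_def by simp

definition sym_at :: "nat \<Rightarrow> ((nat \<Rightarrow> complex) \<Rightarrow> complex) \<Rightarrow> bool" where
  "sym_at t \<phi> \<longleftrightarrow> (\<forall>x. \<phi> (x \<circ> Transposition.transpose t (t+1)) = \<phi> x)"

definition Zm where
  "Zm q eps k n m h \<longleftrightarrow> (\<forall>\<phi>. (\<forall>t. 1 \<le> t \<longrightarrow> t < m \<longrightarrow> sym_at t \<phi>) \<longrightarrow> Zs q eps k n (\<lambda>x. h x * \<phi> x))"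

lemma Zm_add: "Zm q eps k n m h1 \<Longrightarrow> Zm q eps k n m h2 \<Longrightarrow> Zm q eps k n m (\<lambda>x. h1 x + h2 x)"
  unfolding Zm_def using Zs_add by (fastforce simp: distrib_right)

lemma Zm_scale: "Zm q eps k n m h \<Longrightarrow> Zm q eps k n m (\<lambda>x. c * h x)"
  unfolding Zm_def using Zs_scale by (fastforce simp: mult.assoc)

lemma Zm_zero: "Zm q eps k n m (\<lambda>x. 0)"
  unfolding Zm_def using Zs_zero by simp

lemma Zm_mono: "Zm q eps k n m h \<Longrightarrow> m \<le> m' \<Longrightarrow> Zm q eps k n m' h"
  unfolding Zm_def by auto

lemma Zm_Zs: "Zm q eps k n m h \<Longrightarrow> Zs q eps k n h"
  unfolding Zm_def sym_at_def by (erule allE[of _ "\<lambda>x. 1"]) simp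

lemma Zm_mult: "Zm q eps k n m h \<Longrightarrow> (\<And>t. 1 \<le> t \<Longrightarrow> t < m \<Longrightarrow> sym_at t \<psi>) \<Longrightarrow> Zm q eps k n m (\<lambda>x. h x * \<psi> x)"
  unfolding Zm_def
proof (intro allI impI)
  fix \<phi>
  assume H: "\<forall>\<phi>. (\<forall>t. 1 \<le> t \<longrightarrow> t < m \<longrightarrow> sym_at t \<phi>) \<longrightarrow> Zs q eps k n (\<lambda>x. h x * \<phi> x)"
    and p: "\<And>t. 1 \<le> t \<Longrightarrow> t < m \<Longrightarrow> sym_at t \<psi>"
    and f: "\<forall>t. 1 \<le> t \<longrightarrow> t < m \<longrightarrow> sym_at t \<phi>"
  have "\<forall>t. 1 \<le> t \<longrightarrow> t < m \<longrightarrow> sym_at t (\<lambda>x. \<psi> x * \<phi> x)"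
    using p f unfolding sym_at_def by simp
  then have "Zs q eps k n (\<lambda>x. h x * (\<psi> x * \<phi> x))" using H by blast
  then show "Zs q eps k n (\<lambda>x. h x * \<psi> x * \<phi> x)" by (simp add: mult.assoc)
qed

lemma Zm_sum: "finite I \<Longrightarrow> (\<And>i. i \<in> I \<Longrightarrow> Zm q eps k n m (h i)) \<Longrightarrow> Zm q eps k n m (\<lambda>x. \<Sum>i\<in>I. h i x)"
  by (induction I rule: finite_induct) (auto intro: Zm_add Zm_zero)

lemma Zm_local:
  assumes q0: "q \<noteq> 0" and t: "1 \<le> t" "t + 1 \<le> k" "t < m" and g: "sym_at t g"
  shows "Zm q eps k n m (\<lambda>x. (complex_of_real q * x t - x (t+1)) * g x)"
  unfolding Zm_def
proof (intro allI impI)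
  fix \<phi> assume "\<forall>t. 1 \<le> t \<longrightarrow> t < m \<longrightarrow> sym_at t \<phi>"
  then have "sym_at t \<phi>" using t by blast
  then have "\<And>x. g (x \<circ> Transposition.transpose t (t+1)) * \<phi> (x \<circ> Transposition.transpose t (t+1)) = g x * \<phi> x"
    using g unfolding sym_at_def by simp
  from Zs_local[OF q0 t(1,2), of "\<lambda>x. g x * \<phi> x" eps n] this
  show "Zs q eps k n (\<lambda>x. (complex_of_real q * x t - x (t + 1)) * g x * \<phi> x)"
    by (simp add: mult.assoc)
qed

lemma sym_at_prod:
  assumes "t \<notin> S" "t + 1 \<notin> S"
  shows "sym_at t (\<lambda>x. \<Prod>j\<in>S. eps - x j)"
  unfolding sym_at_def
proof
  fix x :: "nat \<Rightarrow> complex"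
  show "(\<Prod>j\<in>S. eps - (x \<circ> Transposition.transpose t (t + 1)) j) = (\<Prod>j\<in>S. eps - x j)"
    by (rule prod.cong) (use assms in \<open>auto simp: transpose_def\<close>)
qed

lemma long_range:
  assumes q0: "q \<noteq> 0" and a: "1 \<le> a" "a + d \<le> k"
    and g: "\<And>t. a \<le> t \<Longrightarrow> t < a + d \<Longrightarrow> sym_at t g"
  shows "Zm q eps k n (a+d) (\<lambda>x. ((eps - x (a+d)) - complex_of_real q ^ d * (eps - x a)
            - (1 - complex_of_real q ^ d) * eps) * g x)"
  using a g
proof (induction d)
  case 0
  then show ?case using Zm_zero[of q eps k n a] by simp
next
  case (Suc d)
  let ?qq = "complex_of_real q"
  have IH: "Zm q eps k n (a+d+1) (\<lambda>x. ((eps - x (a+d)) - ?qq ^ d * (eps - x a)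
            - (1 - ?qq ^ d) * eps) * g x)"
    using Suc by (intro Zm_mono[OF Suc.IH]) auto
  have L: "Zm q eps k n (a+d+1) (\<lambda>x. (?qq * x (a+d) - x (a+d+1)) * g x)"
    using Suc.prems by (intro Zm_local[OF q0]) auto
  have "Zm q eps k n (a+d+1) (\<lambda>x. (?qq * x (a+d) - x (a+d+1)) * g x + ?qq * (((eps - x (a+d)) - ?qq ^ d * (eps - x a)
            - (1 - ?qq ^ d) * eps) * g x))"
    by (rule Zm_add[OF L Zm_scale[OF IH]])
  moreover have "\<And>x. (?qq * x (a+d) - x (a+d+1)) * g x + ?qq * (((eps - x (a+d)) - ?qq ^ d * (eps - x a)
            - (1 - ?qq ^ d) * eps) * g x) = ((eps - x (a + Suc d)) - ?qq ^ Suc d * (eps - x a)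
            - (1 - ?qq ^ Suc d) * eps) * g x"
    by (simp add: algebra_simps)
  ultimately show ?case by simp
qed

lemma qpoch_Suc: "qpoch a qq (Suc j) = qpoch a qq j * (1 - qq ^ j * a)"
  unfolding qpoch_def by simp

lemma qpoch_nz:
  assumes "0 < q" "q < 1"
  shows "qpoch (complex_of_real q) (complex_of_real q) j \<noteq> 0"
  unfolding qpoch_def
proof -
  have "1 - complex_of_real q ^ i * complex_of_real q \<noteq> 0" for i
  proof -
  have "q ^ i \<le> 1" using assms by (intro power_le_one) auto
  then have le: "q ^ i * q \<le> 1 * q" using assms by (intro mult_right_mono) auto
  have "q ^ i * q < 1" using le assms by linarith
  then have "complex_of_real (q ^ i * q) \<noteq> 1" by (simp only: of_real_eq_1_iff)
  then show "1 - complex_of_real q ^ i * complex_of_real q \<noteq> 0" by simp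
  qed
  then show "(\<Prod>i<j. 1 - complex_of_real q ^ i * complex_of_real q) \<noteq> 0" by simp
qed

definition cc :: "real \<Rightarrow> complex \<Rightarrow> nat \<Rightarrow> nat \<Rightarrow> complex" where
  "cc q eps m i = eps ^ (m - i - 1) * complex_of_real q ^ i
                   * qpoch (complex_of_real q) (complex_of_real q) (m - 1)
                   / qpoch (complex_of_real q) (complex_of_real q) i"

lemma cc_alg: "\<And>E e Q B C X Y :: complex. Y \<noteq> 0 \<Longrightarrow> 1 - Q * B \<noteq> 0 \<Longrightarrow>
          E*e*(Q*B)*(X*(1-B*C*Q*Q))/(Y*(1-Q*B)) = E*e*B*X/Y*(C*Q*Q) + E*(Q*B)*X/(Y*(1-Q*B))*(1-C*Q)*e"
proof -
  fix E e Q B C X Y :: complex assume a: "Y \<noteq> 0" "1 - Q * B \<noteq> 0"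
  have num: "E*e*(Q*B)*(X*(1-B*C*Q*Q)) = E*e*B*X*(C*Q*Q)*(1-Q*B) + E*(Q*B)*X*(1-C*Q)*e"
    by algebra
  have t1: "E*e*B*X/Y*(C*Q*Q) = E*e*B*X*(C*Q*Q)*(1-Q*B)/(Y*(1-Q*B))" using a by simp
  have t2: "E*(Q*B)*X/(Y*(1-Q*B))*(1-C*Q)*e = E*(Q*B)*X*(1-C*Q)*e/(Y*(1-Q*B))" by simp
  show "E*e*(Q*B)*(X*(1-B*C*Q*Q))/(Y*(1-Q*B)) = E*e*B*X/Y*(C*Q*Q) + E*(Q*B)*X/(Y*(1-Q*B))*(1-C*Q)*e"
    unfolding t1 t2 num by (rule add_divide_distrib)
qed

lemma cc_rec:
  assumes q: "0 < q" "q < 1" and m: "1 \<le> m" "i \<le> m"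
  shows "cc q eps (Suc m) i = (if i = 0 then 0 else cc q eps m (i-1) * complex_of_real q ^ (m-(i-1)))
          + (if i < m then cc q eps m i * (1 - complex_of_real q ^ (m-i)) * eps else 0)"
proof -
  let ?qq = "complex_of_real q"
  let ?P = "qpoch ?qq ?qq"
  have nz: "\<And>j. ?P j \<noteq> 0" using qpoch_nz[OF q] by blast
  have PS: "\<And>j. ?P (Suc j) = ?P j * (1 - ?qq ^ Suc j)" by (simp add: qpoch_Suc)
  have q0: "?qq \<noteq> 0" using q by simp
  show ?thesis
  proof (cases "i = 0")
    case True
    then obtain r where r: "m = Suc r" using m by (cases m) auto
    have P0: "?P 0 = 1" by (simp add: qpoch_def)
    show ?thesis using True by (simp add: cc_def r PS P0 algebra_simps)
  next
    case False
    then obtain j where j: "i = Suc j" by (cases i) auto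
    show ?thesis
    proof (cases "i = m")
      case True
      then have mj: "m = Suc j" using j by simp
      have "cc q eps (Suc m) i = ?qq ^ Suc j" using nz[of "Suc j"] by (simp add: cc_def j mj)
      moreover have "cc q eps m (i-1) = ?qq ^ j" using nz[of j] by (simp add: cc_def j mj)
      ultimately show ?thesis using j mj by (simp add: mult.commute)
    next
      case False
      have im: "Suc j < m" using m j False by simp
      define r where "r = m - j - 2"
      have r: "m = j + r + 2" using im unfolding r_def by simp
      have n1: "1 - ?qq * ?qq ^ j \<noteq> 0" using nz[of "Suc j"] PS[of j] by auto
      have e2: "?P (Suc (Suc (j+r))) = ?P (Suc (j+r)) * (1 - ?qq ^ j * ?qq ^ r * ?qq * ?qq)"
      proof -
        have pw: "?qq ^ Suc (Suc (j+r)) = ?qq ^ j * ?qq ^ r * ?qq * ?qq"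
          unfolding power_Suc power_add by (simp only: ac_simps)
        show ?thesis by (subst PS, subst pw, rule refl)
      qed
      have lhs: "cc q eps (Suc m) i = eps^r * eps * (?qq * ?qq^j) * (?P (Suc (j+r)) * (1 - ?qq ^ j * ?qq ^ r * ?qq * ?qq)) / (?P j * (1 - ?qq * ?qq^j))"
        unfolding cc_def j using PS[of j] by (simp add: r e2)
      have r1: "cc q eps m (i-1) * ?qq ^ (m-(i-1)) = eps^r * eps * ?qq^j * ?P (Suc (j+r)) / ?P j * (?qq^r * ?qq * ?qq)"
        unfolding cc_def j by (simp add: r mult_ac)
      have r2: "cc q eps m i * (1 - ?qq ^ (m-i)) * eps = eps^r * (?qq * ?qq^j) * ?P (Suc (j+r)) / (?P j * (1 - ?qq * ?qq^j)) * (1 - ?qq^r * ?qq) * eps"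
        unfolding cc_def j using PS[of j] by (simp add: r mult_ac)
      have "i < m" using r j by simp
      then have AB: "(if i = 0 then 0 else cc q eps m (i-1) * ?qq ^ (m-(i-1)))
          + (if i < m then cc q eps m i * (1 - ?qq ^ (m-i)) * eps else 0)
          = cc q eps m (i-1) * ?qq ^ (m-(i-1)) + cc q eps m i * (1 - ?qq ^ (m-i)) * eps"
        using j by simp
      show ?thesis
        apply (subst AB) apply (subst lhs, subst r1, subst r2) by (rule cc_alg[OF nz n1])
    qed
  qed
qed

lemma sum_shift:
  assumes q: "0 < q" "q < 1" and m: "1 \<le> m"
  shows "(\<Sum>i<m. cc q eps m i * (complex_of_real q ^ (m-i) * U (Suc i) + (1 - complex_of_real q ^ (m-i)) * eps * U i))
       = (\<Sum>i<Suc m. cc q eps (Suc m) i * U i)"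
proof -
  let ?qq = "complex_of_real q"
  have "(\<Sum>i<Suc m. cc q eps (Suc m) i * U i)
     = (\<Sum>i<Suc m. (if i = 0 then 0 else cc q eps m (i-1) * ?qq ^ (m-(i-1)) * U i)
                 + (if i < m then cc q eps m i * (1 - ?qq ^ (m-i)) * eps * U i else 0))"
    by (rule sum.cong) (use cc_rec[OF q m] in \<open>auto simp: distrib_right\<close>)
  also have "\<dots> = (\<Sum>i<Suc m. (if i = 0 then 0 else cc q eps m (i-1) * ?qq ^ (m-(i-1)) * U i))
                 + (\<Sum>i<Suc m. (if i < m then cc q eps m i * (1 - ?qq ^ (m-i)) * eps * U i else 0))"
    by (rule sum.distrib)
  also have "(\<Sum>i<Suc m. (if i = 0 then 0 else cc q eps m (i-1) * ?qq ^ (m-(i-1)) * U i))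
      = (\<Sum>i<m. cc q eps m i * ?qq ^ (m-i) * U (Suc i))"
    by (subst sum.lessThan_Suc_shift) simp
  also have "(\<Sum>i<Suc m. (if i < m then cc q eps m i * (1 - ?qq ^ (m-i)) * eps * U i else 0))
      = (\<Sum>i<m. cc q eps m i * (1 - ?qq ^ (m-i)) * eps * U i)"
    by (subst sum.lessThan_Suc) simp
  finally show ?thesis
    by (simp add: sum.distrib[symmetric] algebra_simps)
qed

lemma main_ind:
  assumes q: "0 < q" "q < 1" and m: "1 \<le> m" "m \<le> k"
  shows "Zm q eps k n m (\<lambda>x. (\<Prod>j\<in>{2..m}. eps - x j) - (\<Sum>i<m. cc q eps m i * (\<Prod>j\<in>{1..i}. eps - x j)))"
  using m
proof (induction m)
  case 0 then show ?case by simp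
next
  case (Suc m)
  let ?qq = "complex_of_real q"
  have q0: "q \<noteq> 0" using q by simp
  show ?case
  proof (cases "m = 0")
    case True
    then show ?thesis using Zm_zero[of q eps k n 1] by (simp add: cc_def qpoch_def)
  next
    case False
    then have m1: "1 \<le> m" by simp
    have IH: "Zm q eps k n m (\<lambda>x. (\<Prod>j\<in>{2..m}. eps - x j) - (\<Sum>i<m. cc q eps m i * (\<Prod>j\<in>{1..i}. eps - x j)))"
      using Suc m1 by simp
    have symu: "sym_at t (\<lambda>x. eps - x (Suc m))" if "1 \<le> t" "t < m" for t
      using that unfolding sym_at_def by (simp add: transpose_def)
    have H1: "Zm q eps k n (Suc m) (\<lambda>x. ((\<Prod>j\<in>{2..m}. eps - x j) - (\<Sum>i<m. cc q eps m i * (\<Prod>j\<in>{1..i}. eps - x j))) * (eps - x (Suc m)))"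
      by (rule Zm_mono[OF Zm_mult[OF IH symu]]) auto
    have L: "Zm q eps k n (Suc m) (\<lambda>x. ((eps - x (Suc m)) - ?qq ^ (m - i) * (eps - x (Suc i))
            - (1 - ?qq ^ (m - i)) * eps) * (\<Prod>j\<in>{1..i}. eps - x j))" if i: "i < m" for i
    proof -
      have e: "Suc i + (m - i) = Suc m" using i by simp
      have "Zm q eps k n (Suc i + (m - i)) (\<lambda>x. ((eps - x (Suc i + (m - i))) - ?qq ^ (m - i) * (eps - x (Suc i))
            - (1 - ?qq ^ (m - i)) * eps) * (\<Prod>j\<in>{1..i}. eps - x j))"
        by (rule long_range[OF q0]) (use i Suc.prems in \<open>auto intro!: sym_at_prod\<close>)
      then show ?thesis unfolding e .
    qed
    have H2: "Zm q eps k n (Suc m) (\<lambda>x. \<Sum>i<m. cc q eps m i * (((eps - x (Suc m)) - ?qq ^ (m - i) * (eps - x (Suc i))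
            - (1 - ?qq ^ (m - i)) * eps) * (\<Prod>j\<in>{1..i}. eps - x j)))"
    proof (rule Zm_sum)
      fix i assume "i \<in> {..<m}"
      then have "i < m" by simp
      from Zm_scale[OF L[OF this]] show "Zm q eps k n (Suc m) (\<lambda>x. cc q eps m i * (((eps - x (Suc m)) - ?qq ^ (m - i) * (eps - x (Suc i))
            - (1 - ?qq ^ (m - i)) * eps) * (\<Prod>j\<in>{1..i}. eps - x j)))" .
    qed simp
    have H: "Zm q eps k n (Suc m) (\<lambda>x. ((\<Prod>j\<in>{2..m}. eps - x j) - (\<Sum>i<m. cc q eps m i * (\<Prod>j\<in>{1..i}. eps - x j))) * (eps - x (Suc m))
       + (\<Sum>i<m. cc q eps m i * (((eps - x (Suc m)) - ?qq ^ (m - i) * (eps - x (Suc i))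
            - (1 - ?qq ^ (m - i)) * eps) * (\<Prod>j\<in>{1..i}. eps - x j))))"
      by (rule Zm_add[OF H1 H2])
    have eq: "((\<Prod>j\<in>{2..m}. eps - x j) - (\<Sum>i<m. cc q eps m i * (\<Prod>j\<in>{1..i}. eps - x j))) * (eps - x (Suc m))
       + (\<Sum>i<m. cc q eps m i * (((eps - x (Suc m)) - ?qq ^ (m - i) * (eps - x (Suc i))
            - (1 - ?qq ^ (m - i)) * eps) * (\<Prod>j\<in>{1..i}. eps - x j)))
       = (\<Prod>j\<in>{2..Suc m}. eps - x j) - (\<Sum>i<Suc m. cc q eps (Suc m) i * (\<Prod>j\<in>{1..i}. eps - x j))" for x
    proof -
      let ?U = "\<lambda>i. \<Prod>j\<in>{1..i}. eps - x j"
      have US: "?U (Suc i) = ?U i * (eps - x (Suc i))" for i by (simp add: prod.cl_ivl_Suc)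
      have PM: "(\<Prod>j\<in>{2..Suc m}. eps - x j) = (\<Prod>j\<in>{2..m}. eps - x j) * (eps - x (Suc m))"
        using m1 by (simp add: prod.cl_ivl_Suc)
      have "(\<Sum>i<m. cc q eps m i * (((eps - x (Suc m)) - ?qq ^ (m - i) * (eps - x (Suc i))
            - (1 - ?qq ^ (m - i)) * eps) * ?U i))
          = (\<Sum>i<m. cc q eps m i * ?U i) * (eps - x (Suc m))
            - (\<Sum>i<m. cc q eps m i * (?qq ^ (m-i) * ?U (Suc i) + (1 - ?qq ^ (m-i)) * eps * ?U i))"
      proof -
        have "(\<Sum>i<m. cc q eps m i * (((eps - x (Suc m)) - ?qq ^ (m - i) * (eps - x (Suc i))
            - (1 - ?qq ^ (m - i)) * eps) * ?U i))
          = (\<Sum>i<m. cc q eps m i * ?U i * (eps - x (Suc m))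
            - cc q eps m i * (?qq ^ (m-i) * ?U (Suc i) + (1 - ?qq ^ (m-i)) * eps * ?U i))"
          by (rule sum.cong) (simp_all only: US, simp_all add: algebra_simps)
        also have "\<dots> = (\<Sum>i<m. cc q eps m i * ?U i * (eps - x (Suc m)))
            - (\<Sum>i<m. cc q eps m i * (?qq ^ (m-i) * ?U (Suc i) + (1 - ?qq ^ (m-i)) * eps * ?U i))"
          by (rule sum_subtractf)
        finally show ?thesis by (simp add: sum_distrib_right)
      qed
      then show ?thesis unfolding PM sum_shift[OF q m1, of eps ?U] by (simp add: algebra_simps)
    qed
    show ?thesis using H unfolding eq .
  qed
qed

theorem lemma6p6:
  fixes q :: real and k :: nat and eps :: complex and n :: int
  assumes "0 < q" and "q < 1" and "1 \<le> k"
  shows "qapprox q eps k (\<lambda>_. n)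
           (\<lambda>w. \<Prod>j\<in>{2..k}. eps - w j)
           (\<lambda>w. \<Sum>i\<in>{0..k-1}.
                 (eps ^ (k - i - 1) * complex_of_real q ^ i
                   * qpoch (complex_of_real q) (complex_of_real q) (k - 1)
                   / qpoch (complex_of_real q) (complex_of_real q) i)
                 * (\<Prod>j\<in>{1..i}. eps - w j))"
proof -
  have Z: "Zs q eps k n (\<lambda>x. (\<Prod>j\<in>{2..k}. eps - x j) - (\<Sum>i<k. cc q eps k i * (\<Prod>j\<in>{1..i}. eps - x j)))"
    by (rule Zm_Zs[OF main_ind]) (use assms in auto)
  have set: "{0..k-1} = {..<k}" using assms(3) by auto
  have hx: "\<And>x. (\<Prod>j\<in>{2..k}. eps - x j) - (\<Sum>i\<in>{0..k-1}.
                 (eps ^ (k - i - 1) * complex_of_real q ^ i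
                   * qpoch (complex_of_real q) (complex_of_real q) (k - 1)
                   / qpoch (complex_of_real q) (complex_of_real q) i)
                 * (\<Prod>j\<in>{1..i}. eps - x j))
       = (\<Prod>j\<in>{2..k}. eps - x j) - (\<Sum>i<k. cc q eps k i * (\<Prod>j\<in>{1..i}. eps - x j))"
    unfolding set cc_def by simp
  show ?thesis
    unfolding qapprox_def hx using Z unfolding Zs_def by blast
qed

end
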